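(* Let $\mathcal{F}=\mathcal{B}(K_3)$. Then, as $k\to\infty$, $$\frac{k}{2}-o(k)\;\le\; R_3(\mathcal{F},k)\;\le\;\frac{3k}{4}+o(k).$$
   Context: For a graph $G$, a hypergraph $H$ is a Berge-$G$ hypergraph if there are an injective map $\phi:V(G)\to V(H)$ and pairwise distinct hyperedges $e_{xy}\in E(H)$, one for each $xy\in E(G)$, with $\phi(x),\phi(y)\in e_{xy}$. $\mathcal{B}(G)$ denotes the family of all Berge-$G$ hypergraphs. $K_n^r$ denotes the complete $r$-uniform hypergraph on $n$ vertices. For a family $\mathcal{H}$ of $r$-uniform hypergraphs and integers $k\ge 2$, $r\ge 2$, the Ramsey number $R_r(\mathcal{H},k)$ is the smallest integer $n$ such that every coloring of the hyperedges of $K_n^r$ with $k$ colors contains a monochromatic subhypergraph belonging to $\mathcal{H}$. *)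

theory Defs
  imports Main "HOL-Library.Landau_Symbols"
begin

definition is_berge :: "'v set \<Rightarrow> 'v set set \<Rightarrow> 'u set \<Rightarrow> 'u set set \<Rightarrow> bool" where
  "is_berge VG EG VH EH \<longleftrightarrow>
     (\<exists>\<phi> f. inj_on \<phi> VG \<and> \<phi> ` VG \<subseteq> VH \<and> inj_on f EG \<and> f ` EG \<subseteq> EH \<and>
            (\<forall>e\<in>EG. \<phi> ` e \<subseteq> f e))"

definition berge_K3 :: "'u set \<Rightarrow> 'u set set \<Rightarrow> bool" where
  "berge_K3 VH EH \<longleftrightarrow> is_berge {0::nat, 1, 2} {{0, 1}, {1, 2}, {0, 2}} VH EH"

definition complete_edges :: "nat \<Rightarrow> nat \<Rightarrow> nat set set" where
  "complete_edges n r = {e. e \<subseteq> {..<n} \<and> card e = r}"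

definition ramsey_prop :: "nat \<Rightarrow> (nat set \<Rightarrow> nat set set \<Rightarrow> bool) \<Rightarrow> nat \<Rightarrow> nat \<Rightarrow> bool" where
  "ramsey_prop r F k n \<longleftrightarrow>
     (\<forall>\<chi> :: nat set \<Rightarrow> nat. (\<forall>e\<in>complete_edges n r. \<chi> e < k) \<longrightarrow>
        (\<exists>i<k. \<exists>V' E'. V' \<subseteq> {..<n} \<and> E' \<subseteq> {e\<in>complete_edges n r. \<chi> e = i} \<and>
                       (\<forall>e\<in>E'. e \<subseteq> V') \<and> F V' E'))"

definition ramsey_number :: "nat \<Rightarrow> (nat set \<Rightarrow> nat set set \<Rightarrow> bool) \<Rightarrow> nat \<Rightarrow> nat" where
  "ramsey_number r F k = (LEAST n. ramsey_prop r F k n)"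

end

theory Submission
  imports Defs
begin

lemma three_edges_dist: "{0::nat,1} \<noteq> {1,2}" "{1::nat,2} \<noteq> {0,2}" "{0::nat,1} \<noteq> {0,2}"
proof -
  show "{0::nat,1} \<noteq> {1,2}" proof assume "{0::nat,1} = {1,2}" then have "(0::nat) \<in> {1,2}" by blast then show False by simp qed
  show "{1::nat,2} \<noteq> {0,2}" proof assume "{1::nat,2} = {0,2}" then have "(1::nat) \<in> {0,2}" by blast then show False by simp qed
  show "{0::nat,1} \<noteq> {0,2}" proof assume "{0::nat,1} = {0,2}" then have "(1::nat) \<in> {0,2}" by blast then show False by simp qed
qed

lemma berge_K3_D:
  assumes "berge_K3 V E"
  shows "\<exists>p q w e1 e2 e3. p \<noteq> q \<and> q \<noteq> w \<and> p \<noteq> w \<and> e1 \<in> E \<and> e2 \<in> E \<and> e3 \<in> E \<and>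
     e1 \<noteq> e2 \<and> e2 \<noteq> e3 \<and> e1 \<noteq> e3 \<and> {p,q} \<subseteq> e1 \<and> {q,w} \<subseteq> e2 \<and> {p,w} \<subseteq> e3"
proof -
  obtain \<phi> f where i: "inj_on \<phi> {0::nat,1,2}" and fi: "inj_on f {{0::nat, 1}, {1, 2}, {0, 2}}"
    and fE: "f ` {{0::nat, 1}, {1, 2}, {0, 2}} \<subseteq> E"
    and c: "\<forall>e\<in>{{0::nat, 1}, {1, 2}, {0, 2}}. \<phi> ` e \<subseteq> f e"
    using assms unfolding berge_K3_def is_berge_def by metis
  note d = three_edges_dist
  have p1: "\<phi> 0 \<noteq> \<phi> 1" "\<phi> 1 \<noteq> \<phi> 2" "\<phi> 0 \<noteq> \<phi> 2"
    using inj_onD[OF i, of 0 1] inj_onD[OF i, of 1 2] inj_onD[OF i, of 0 2] by auto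
  have p2: "f {0,1} \<noteq> f {1,2}" "f {1,2} \<noteq> f {0,2}" "f {0,1} \<noteq> f {0,2}"
    using inj_onD[OF fi, of "{0,1}" "{1,2}"] inj_onD[OF fi, of "{1,2}" "{0,2}"]
      inj_onD[OF fi, of "{0,1}" "{0,2}"] d by blast+
  have p3: "f {0,1} \<in> E" "f {1,2} \<in> E" "f {0,2} \<in> E" using fE by blast+
  have c1: "\<phi> ` {0,1} \<subseteq> f {0,1}" "\<phi> ` {1,2} \<subseteq> f {1,2}" "\<phi> ` {0,2} \<subseteq> f {0,2}"
    using c by blast+
  then have p4: "{\<phi> 0, \<phi> 1} \<subseteq> f {0,1}" "{\<phi> 1, \<phi> 2} \<subseteq> f {1,2}" "{\<phi> 0, \<phi> 2} \<subseteq> f {0,2}"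
    by blast+
  show ?thesis using p1 p2 p3 p4 by blast
qed

lemma inj3: "f a \<noteq> f b \<Longrightarrow> f b \<noteq> f c \<Longrightarrow> f a \<noteq> f c \<Longrightarrow> inj_on f {a,b,c}"
  unfolding inj_on_def by auto

lemma berge_K3_I:
  assumes "p \<noteq> q" "q \<noteq> w" "p \<noteq> w" "e1 \<in> E" "e2 \<in> E" "e3 \<in> E"
     "e1 \<noteq> e2" "e2 \<noteq> e3" "e1 \<noteq> e3" "{p,q} \<subseteq> e1" "{q,w} \<subseteq> e2" "{p,w} \<subseteq> e3"
     "p \<in> V" "q \<in> V" "w \<in> V"
  shows "berge_K3 V E"
proof -
  define \<phi> where "\<phi> = (\<lambda>i::nat. if i = 0 then p else if i = 1 then q else w)"
  define f where "f = (\<lambda>s::nat set. if s = {0,1} then e1 else if s = {1,2} then e2 else e3)"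
  note d = three_edges_dist
  have f1: "f {0,1} = e1" "f {1,2} = e2" "f {0,2} = e3" unfolding f_def using d by auto
  have a1: "inj_on \<phi> {0,1,2}" using assms unfolding \<phi>_def inj_on_def by auto
  have a2: "inj_on f {{0::nat, 1}, {1, 2}, {0, 2}}" 
    by (rule inj3) (simp_all only: f1 assms(7-9) not_False_eq_True)
  have a3: "f ` {{0::nat, 1}, {1, 2}, {0, 2}} \<subseteq> E" using assms by (simp only: image_insert image_empty f1) blast
  have a4: "\<forall>e\<in>{{0::nat, 1}, {1, 2}, {0, 2}}. \<phi> ` e \<subseteq> f e" using assms
    by (simp only: ball_simps f1 image_insert image_empty) (simp add: \<phi>_def)
  have a5: "\<phi> ` {0,1,2} \<subseteq> V" using assms unfolding \<phi>_def by auto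
  show ?thesis unfolding berge_K3_def is_berge_def
    by (rule exI[of _ \<phi>], rule exI[of _ f], intro conjI; (rule a1 | rule a2 | rule a3 | rule a4 | rule a5))
qed


lemma mantel:
  assumes "finite V" "\<forall>p\<in>G. p \<subseteq> V \<and> card p = 2"
    "\<And>x y z. {x,y} \<in> G \<Longrightarrow> {y,z} \<in> G \<Longrightarrow> {x,z} \<in> G \<Longrightarrow> False"
  shows "4 * card G \<le> card V ^ 2"
  using assms
proof (induction "card V" arbitrary: V G rule: less_induct)
  case less
  show ?case
  proof (cases "G = {}")
    case True then show ?thesis by simp
  next
    case False
    then obtain p where pG: "p \<in> G" by auto
    then have "p \<subseteq> V" "card p = 2" using less.prems by auto
    then obtain x y where p: "p = {x,y}" "x \<noteq> y" by (auto simp: card_2_iff)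
    have xV: "x \<in> V" "y \<in> V" using \<open>p \<subseteq> V\<close> p by auto
    define V' where "V' = V - {x,y}"
    define G' where "G' = {q\<in>G. q \<subseteq> V'}"
    define Nx where "Nx = {w\<in>V'. {x,w} \<in> G}"
    define Ny where "Ny = {w\<in>V'. {y,w} \<in> G}"
    have finV': "finite V'" using less.prems V'_def by auto
    have cV': "card V' = card V - 2" unfolding V'_def using xV p less.prems(1)
      by (simp add: card_Diff_subset)
    have cV: "card V \<ge> 2" using card_mono[OF less.prems(1) \<open>p \<subseteq> V\<close>] \<open>card p = 2\<close> by simp
    have IH: "4 * card G' \<le> card V' ^ 2"
    proof (rule less.hyps)
      show "card V' < card V" using cV' cV by simp
      show "finite V'" by (rule finV')
      show "\<forall>p\<in>G'. p \<subseteq> V' \<and> card p = 2" using less.prems(2) G'_def by auto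
      show "\<And>x y z. {x,y} \<in> G' \<Longrightarrow> {y,z} \<in> G' \<Longrightarrow> {x,z} \<in> G' \<Longrightarrow> False"
      proof -
        fix x y z assume "{x,y} \<in> G'" "{y,z} \<in> G'" "{x,z} \<in> G'"
        then have "{x,y} \<in> G" "{y,z} \<in> G" "{x,z} \<in> G" unfolding G'_def by auto
        then show False by (rule less.prems(3))
      qed
    qed
    have disj: "Nx \<inter> Ny = {}"
    proof (rule ccontr)
      assume "Nx \<inter> Ny \<noteq> {}"
      then obtain w where "{x,w} \<in> G" "{y,w} \<in> G" unfolding Nx_def Ny_def by auto
      moreover have "{y,w} = {w,y}" by auto
      ultimately show False using less.prems(3)[of x y w] pG p by auto
    qed
    have sub: "Nx \<union> Ny \<subseteq> V'" unfolding Nx_def Ny_def by auto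
    have cN: "card Nx + card Ny \<le> card V'"
      using card_Un_disjoint[of Nx Ny] disj sub card_mono[OF finV' sub] finite_subset[OF sub finV']
      by auto
    have Gsub: "G \<subseteq> G' \<union> {{x,y}} \<union> (\<lambda>w. {x,w}) ` Nx \<union> (\<lambda>w. {y,w}) ` Ny"
    proof
      fix q assume qG: "q \<in> G"
      then have "q \<subseteq> V" "card q = 2" using less.prems by auto
      then obtain a b where q: "q = {a,b}" "a \<noteq> b" by (auto simp: card_2_iff)
      show "q \<in> G' \<union> {{x,y}} \<union> (\<lambda>w. {x,w}) ` Nx \<union> (\<lambda>w. {y,w}) ` Ny"
      proof (cases "q \<subseteq> V'")
        case True then show ?thesis using qG G'_def by auto
      next
        case False
        then have "a \<in> {x,y} \<or> b \<in> {x,y}" using q \<open>q \<subseteq> V\<close> V'_def by auto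
        then show ?thesis
        proof (elim disjE)
          assume a: "a \<in> {x,y}"
          show ?thesis
          proof (cases "b \<in> {x,y}")
            case True then have "q = {x,y}" using a q by auto
            then show ?thesis by simp
          next
            case False
            then have bV: "b \<in> V'" using q \<open>q \<subseteq> V\<close> V'_def by auto
            show ?thesis
            proof (cases "a = x")
              case True then have "b \<in> Nx" using bV qG q Nx_def by auto
              then show ?thesis using q True by auto
            next
              case False then have "a = y" using a by auto
              then have "b \<in> Ny" using bV qG q Ny_def by auto
              then show ?thesis using q \<open>a = y\<close> by auto
            qed
          qed
        next
          assume b: "b \<in> {x,y}"
          have q': "q = {b,a}" using q by auto
          show ?thesis
          proof (cases "a \<in> {x,y}")
            case True then have "q = {x,y}" using b q by auto
            then show ?thesis by simp
          next
            case False
            then have aV: "a \<in> V'" using q \<open>q \<subseteq> V\<close> V'_def by auto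
            show ?thesis
            proof (cases "b = x")
              case True then have "a \<in> Nx" using aV qG q' Nx_def by auto
              then show ?thesis using q' True by auto
            next
              case False then have "b = y" using b by auto
              then have "a \<in> Ny" using aV qG q' Ny_def by auto
              then show ?thesis using q' \<open>b = y\<close> by auto
            qed
          qed
        qed
      qed
    qed
    have finG': "finite G'"
    proof -
      have "G' \<subseteq> Pow V'" unfolding G'_def by auto
      then show ?thesis using finV' finite_subset by auto
    qed
    have finN: "finite Nx" "finite Ny" using sub finV' finite_subset by auto
    have "card G \<le> card (G' \<union> {{x,y}} \<union> (\<lambda>w. {x,w}) ` Nx \<union> (\<lambda>w. {y,w}) ` Ny)"
      using Gsub finG' finN by (intro card_mono) auto
    also have "\<dots> \<le> card (G' \<union> {{x,y}} \<union> (\<lambda>w. {x,w}) ` Nx) + card ((\<lambda>w. {y,w}) ` Ny)"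
      by (rule card_Un_le)
    also have "\<dots> \<le> card (G' \<union> {{x,y}}) + card ((\<lambda>w. {x,w}) ` Nx) + card ((\<lambda>w. {y,w}) ` Ny)"
      using card_Un_le[of "G' \<union> {{x,y}}" "(\<lambda>w. {x,w}) ` Nx"] by linarith
    also have "\<dots> \<le> card G' + 1 + card Nx + card Ny"
      using card_Un_le[of G' "{{x,y}}"] card_image_le[OF finN(1), of "\<lambda>w. {x,w}"]
        card_image_le[OF finN(2), of "\<lambda>w. {y,w}"] by simp
    finally have "card G \<le> card G' + 1 + card Nx + card Ny" .
    then have "4 * card G \<le> (card V - 2)^2 + 4 + 4 * (card V - 2)"
    proof -
      have "4 * card G' \<le> (card V - 2)^2" using IH cV' by simp
      then show ?thesis using \<open>card G \<le> card G' + 1 + card Nx + card Ny\<close> cN cV' by linarith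
    qed
    also have "\<dots> = card V ^ 2"
    proof -
      obtain m where "card V = m + 2" using cV by (metis le_add_diff_inverse2)
      then show ?thesis by (simp add: power2_eq_square algebra_simps)
    qed
    finally show ?thesis .
  qed
qed


lemma ub_class:
  assumes H: "\<forall>h\<in>H. h \<subseteq> {..<n} \<and> card h = 3"
    and nb: "\<not> berge_K3 {..<n} H"
  shows "8 * card H \<le> n ^ 2"
proof -
  define U where "U p \<longleftrightarrow> (\<exists>!h. h \<in> H \<and> p \<subseteq> h)" for p :: "nat set"
  define full where "full h \<longleftrightarrow> (\<forall>a\<in>h. \<forall>b\<in>h. a \<noteq> b \<longrightarrow> U {a,b})" for h :: "nat set"
  define G where "G = {p. card p = 2 \<and> (\<exists>h\<in>H. p \<subseteq> h) \<and> U p \<and> \<not>(\<exists>h\<in>H. full h \<and> p = h - {Max h})}"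
  have finH: "finite H"
  proof -
    have "H \<subseteq> Pow {..<n}" using H by auto
    then show ?thesis using finite_subset by auto
  qed
  have berge: False if "p \<noteq> q" "q \<noteq> w" "p \<noteq> w" "e1 \<in> H" "e2 \<in> H" "e3 \<in> H"
     "e1 \<noteq> e2" "e2 \<noteq> e3" "e1 \<noteq> e3" "{p,q} \<subseteq> e1" "{q,w} \<subseteq> e2" "{p,w} \<subseteq> e3" for p q w e1 e2 e3
  proof -
    have "p \<in> {..<n}" "q \<in> {..<n}" "w \<in> {..<n}" using H that by blast+
    then show False using nb berge_K3_I[OF that] by blast
  qed
  have Uuniq: "h' = h" if "U p" "h \<in> H" "h' \<in> H" "p \<subseteq> h" "p \<subseteq> h'" for p h h'
    using that unfolding U_def by blast
  have Ui: "U p" if "h \<in> H" "p \<subseteq> h" "\<And>h'. h' \<in> H \<Longrightarrow> p \<subseteq> h' \<Longrightarrow> h' = h" for p h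
    using that unfolding U_def by blast
  have eq3: "h = {x,y,z}" if "h \<in> H" "{x,y,z} \<subseteq> h" "x \<noteq> y" "y \<noteq> z" "x \<noteq> z" for h x y z
  proof -
    have "card {x,y,z} = 3" using that by auto
    moreover have "card h = 3" using H that(1) by auto
    moreover then have "finite h" using card_gt_0_iff by fastforce
    ultimately show ?thesis using card_subset_eq[OF \<open>finite h\<close> that(2)] by simp
  qed
  have heavy: "U {a,c} \<and> U {b,c}" if "h \<in> H" "h = {a,b,c}" "a \<noteq> b" "b \<noteq> c" "a \<noteq> c" "\<not> U {a,b}" for h a b c
  proof -
    note hyp = that
    show ?thesis
  proof -
    obtain h2 where h2: "h2 \<in> H" "{a,b} \<subseteq> h2" "h2 \<noteq> h"
    proof -
      have "\<not> (\<forall>h'. h' \<in> H \<longrightarrow> {a,b} \<subseteq> h' \<longrightarrow> h' = h)"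
        using hyp(6) Ui[of h "{a,b}"] hyp(1,2) by blast
      then show ?thesis using that hyp(2) by blast
    qed
    have "U {a,c}"
    proof (rule Ui[of h])
      show "h \<in> H" "{a,c} \<subseteq> h" using that by auto
      fix h3 assume h3: "h3 \<in> H" "{a,c} \<subseteq> h3"
      show "h3 = h"
      proof (rule ccontr)
        assume "h3 \<noteq> h"
        moreover have "h2 \<noteq> h3"
        proof
          assume "h2 = h3" then have "{a,b,c} \<subseteq> h2" using h2 h3 by auto
          then have "h2 = h" using eq3[OF h2(1)] that by auto
          then show False using h2 by auto
        qed
        ultimately show False using berge[of a b c h2 h h3] that h2 h3 by auto
      qed
    qed
    moreover have "U {b,c}"
    proof (rule Ui[of h])
      show "h \<in> H" "{b,c} \<subseteq> h" using that by auto
      fix h3 assume h3: "h3 \<in> H" "{b,c} \<subseteq> h3"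
      show "h3 = h"
      proof (rule ccontr)
        assume "h3 \<noteq> h"
        moreover have "h2 \<noteq> h3"
        proof
          assume "h2 = h3" then have "{a,b,c} \<subseteq> h2" using h2 h3 by auto
          then have "h2 = h" using eq3[OF h2(1)] that by auto
          then show False using h2 by auto
        qed
        ultimately show False using berge[of b a c h2 h h3] that h2 h3 by (auto simp: insert_commute)
      qed
    qed
    ultimately show ?thesis by blast
  qed
  qed
  have inG: "p \<in> G" if "h \<in> H" "p \<subseteq> h" "card p = 2" "U p" "\<not> full h \<or> p \<noteq> h - {Max h}" for p h
  proof -
    have "\<not>(\<exists>h'\<in>H. full h' \<and> p = h' - {Max h'})"
    proof
      assume "\<exists>h'\<in>H. full h' \<and> p = h' - {Max h'}"
      then obtain h' where "h' \<in> H" "full h'" "p = h' - {Max h'}" by blast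
      moreover then have "h' = h" using Uuniq[OF that(4) that(1) _ that(2)] by blast
      ultimately show False using that by auto
    qed
    then show ?thesis unfolding G_def using that by auto
  qed
  have tf: False if tG: "{x,y} \<in> G" "{y,z} \<in> G" "{x,z} \<in> G" for x y z
  proof -
    have d: "x \<noteq> y" "y \<noteq> z" "x \<noteq> z" using tG unfolding G_def by (auto simp: card_2_iff)
    obtain e1 where e1: "e1 \<in> H" "{x,y} \<subseteq> e1" using tG G_def by auto
    obtain e2 where e2: "e2 \<in> H" "{y,z} \<subseteq> e2" using tG G_def by auto
    obtain e3 where e3: "e3 \<in> H" "{x,z} \<subseteq> e3" using tG G_def by auto
    have U: "U {x,y}" "U {y,z}" "U {x,z}" using tG G_def by auto
    have "\<exists>h\<in>H. {x,y,z} \<subseteq> h"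
    proof (rule ccontr)
      assume nh: "\<not> (\<exists>h\<in>H. {x,y,z} \<subseteq> h)"
      then have "e1 \<noteq> e2" "e2 \<noteq> e3" "e1 \<noteq> e3" using e1 e2 e3 by auto
      then show False using berge[of x y z e1 e2 e3] d e1 e2 e3 by auto
    qed
    then obtain h where h: "h \<in> H" "{x,y,z} \<subseteq> h" by auto
    then have hh: "h = {x,y,z}" using eq3 d by auto
    have "full h" unfolding full_def using U hh by (auto simp: insert_commute)
    moreover have "Max h \<in> h" using hh by (intro Max_in) auto
    ultimately have "h - {Max h} \<in> G" using tG hh d
      by (auto simp: insert_commute insert_Diff_if)
    then show False unfolding G_def using \<open>full h\<close> h(1) by auto
  qed
  have Gsub: "\<forall>p\<in>G. p \<subseteq> {..<n} \<and> card p = 2" using H unfolding G_def by blast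
  have mant: "4 * card G \<le> card {..<n} ^ 2"
    by (rule mantel[OF _ Gsub]) (use tf in auto)
  define S where "S h = {p\<in>G. p \<subseteq> h}" for h
  have finG: "finite G"
  proof -
    have "G \<subseteq> Pow {..<n}" using Gsub by auto
    then show ?thesis using finite_subset by auto
  qed
  have S2: "2 \<le> card (S h)" if hH: "h \<in> H" for h
  proof -
    obtain a b c where abc: "h = {a,b,c}" "a \<noteq> b" "b \<noteq> c" "a \<noteq> c"
      using H hH by (auto simp: card_3_iff)
    have two: "2 \<le> card (S h)" if "p \<in> S h" "q \<in> S h" "p \<noteq> q" for p q
    proof -
      have "finite (S h)" using finG S_def by auto
      moreover have "{p,q} \<subseteq> S h" using that by auto
      ultimately have "card {p,q} \<le> card (S h)" by (rule card_mono)
      then show ?thesis using that by simp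
    qed
    have c2: "card {u,v} = 2" if "u \<noteq> v" for u v :: nat using that by simp
    show ?thesis
    proof (cases "full h")
      case True
      have U: "U {a,b}" "U {a,c}" "U {b,c}" using True abc unfolding full_def by auto
      define m where "m = Max h"
      have M: "m \<in> h" unfolding m_def using abc by (intro Max_in) auto
      have Sq: "q \<in> S h" if "q \<subseteq> h" "card q = 2" "U q" "q \<noteq> h - {m}" for q
        using inG[OF hH that(1,2,3)] that(1,4) unfolding S_def m_def by auto
      have ab: "{a,b} \<in> S h" if "h - {m} \<noteq> {a,b}" by (rule Sq) (use abc U that in auto)
      have ac: "{a,c} \<in> S h" if "h - {m} \<noteq> {a,c}" by (rule Sq) (use abc U that in auto)
      have bc: "{b,c} \<in> S h" if "h - {m} \<noteq> {b,c}" by (rule Sq) (use abc U that in auto)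
      have ne: "{a,b} \<noteq> {a,c}" "{a,b} \<noteq> {b,c}" "{a,c} \<noteq> {b,c}" using abc by (auto simp: doubleton_eq_iff)
      have "m = a \<or> m = b \<or> m = c" using M abc by auto
      then show ?thesis
      proof (elim disjE)
        assume "m = a" then have "h - {m} = {b,c}" using abc by auto
        then show ?thesis using ab ac ne two by metis
      next
        assume "m = b" then have "h - {m} = {a,c}" using abc by auto
        then show ?thesis using ab bc ne two by metis
      next
        assume "m = c" then have "h - {m} = {a,b}" using abc by auto
        then show ?thesis using ac bc ne two by metis
      qed
    next
      case False
      then obtain u v where uv: "u \<in> h" "v \<in> h" "u \<noteq> v" "\<not> U {u,v}" unfolding full_def by auto
      then obtain w where w: "h = {u,v,w}" "u \<noteq> w" "v \<noteq> w" using abc by auto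
      have "U {u,w} \<and> U {v,w}" using heavy[OF hH w(1) uv(3) w(3) w(2) uv(4)] .
      then have "{u,w} \<in> S h" "{v,w} \<in> S h" using inG[OF hH] False w S_def by auto
      then show ?thesis using two w uv by (auto simp: doubleton_eq_iff)
    qed
  qed
  have disj: "S h \<inter> S h' = {}" if "h \<in> H" "h' \<in> H" "h \<noteq> h'" for h h'
  proof -
    { fix p assume "p \<in> S h" "p \<in> S h'"
      then have "U p" "p \<subseteq> h" "p \<subseteq> h'" unfolding S_def G_def by auto
      then have False using Uuniq[of p h h'] that by blast }
    then show ?thesis by blast
  qed
  have "2 * card H = (\<Sum>h\<in>H. 2)" by simp
  also have "\<dots> \<le> (\<Sum>h\<in>H. card (S h))" using S2 by (intro sum_mono) auto
  also have "\<dots> = card (\<Union>h\<in>H. S h)"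
    using finH finG disj by (intro card_UN_disjoint[symmetric]) (auto simp: S_def)
  also have "\<dots> \<le> card G" using finG by (intro card_mono) (auto simp: S_def)
  finally have "2 * card H \<le> card G" .
  then show ?thesis using mant by simp
qed


lemma choose2': "2 * (n choose 2) = n * (n - 1)"
proof (induction n)
  case 0 then show ?case by simp
next
  case (Suc n)
  have "(Suc n) choose 2 = n + (n choose 2)" by (simp add: numeral_2_eq_2)
  then have "2 * ((Suc n) choose 2) = 2 * n + n * (n - 1)" using Suc by simp
  also have "\<dots> = Suc n * (Suc n - 1)" by (cases n) (auto simp: algebra_simps)
  finally show ?case .
qed
lemma choose3': "6 * (n choose 3) = n * (n - 1) * (n - 2)"
proof (induction n)
  case 0 then show ?case by simp
next
  case (Suc n)
  have "(Suc n) choose 3 = (n choose 2) + (n choose 3)" by (simp add: numeral_3_eq_3 numeral_2_eq_2)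
  then have "6 * ((Suc n) choose 3) = 3 * (n * (n - 1)) + n * (n - 1) * (n - 2)"
    using Suc choose2'[of n] by simp
  also have "\<dots> = Suc n * (Suc n - 1) * (Suc n - 2)"
  proof (cases n)
    case 0 then show ?thesis by simp
  next
    case (Suc m) then show ?thesis by (cases m) (auto simp: algebra_simps)
  qed
  finally show ?case .
qed


lemma card_complete_edges: "card (complete_edges n r) = n choose r"
proof -
  have "complete_edges n r = {B. B \<subseteq> {..<n} \<and> card B = r}" unfolding complete_edges_def by auto
  then show ?thesis using n_subsets[of "{..<n}" r] by simp
qed

lemma ramsey_prop_upper:
  assumes "k * n^2 < 8 * (n choose 3)"
  shows "ramsey_prop 3 berge_K3 k n"
  unfolding ramsey_prop_def
proof (intro allI impI)
  fix \<chi> :: "nat set \<Rightarrow> nat"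
  assume col: "\<forall>e\<in>complete_edges n 3. \<chi> e < k"
  show "\<exists>i<k. \<exists>V' E'. V' \<subseteq> {..<n} \<and> E' \<subseteq> {e \<in> complete_edges n 3. \<chi> e = i} \<and>
                 (\<forall>e\<in>E'. e \<subseteq> V') \<and> berge_K3 V' E'"
  proof (rule ccontr)
    assume no: "\<not> ?thesis"
    define Hc where "Hc i = {e \<in> complete_edges n 3. \<chi> e = i}" for i
    have b: "8 * card (Hc i) \<le> n^2" if "i < k" for i
    proof (rule ub_class)
      show "\<forall>h\<in>Hc i. h \<subseteq> {..<n} \<and> card h = 3" unfolding Hc_def complete_edges_def by auto
      show "\<not> berge_K3 {..<n} (Hc i)"
      proof
        assume "berge_K3 {..<n} (Hc i)"
        moreover have "\<forall>e\<in>Hc i. e \<subseteq> {..<n}" unfolding Hc_def complete_edges_def by auto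
        ultimately show False using no that unfolding Hc_def by blast
      qed
    qed
    have "complete_edges n 3 \<subseteq> (\<Union>i\<in>{..<k}. Hc i)" using col unfolding Hc_def by auto
    then have "card (complete_edges n 3) \<le> card (\<Union>i\<in>{..<k}. Hc i)"
    proof (rule card_mono[rotated])
      have "\<And>i. Hc i \<subseteq> Pow {..<n}" unfolding Hc_def complete_edges_def by auto
      then have "\<And>i. finite (Hc i)" using finite_subset by blast
      then show "finite (\<Union>i\<in>{..<k}. Hc i)" by auto
    qed
    also have "\<dots> \<le> (\<Sum>i<k. card (Hc i))" by (rule card_UN_le) simp
    finally have "8 * (n choose 3) \<le> 8 * (\<Sum>i<k. card (Hc i))" by (simp add: card_complete_edges)
    also have "\<dots> = (\<Sum>i<k. 8 * card (Hc i))" by (simp add: sum_distrib_left)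
    also have "\<dots> \<le> (\<Sum>i<k. n^2)" using b by (intro sum_mono) auto
    also have "\<dots> = k * n^2" by simp
    finally show False using assms by simp
  qed
qed

lemma upper_nat:
  assumes "k \<ge> 1"
  shows "ramsey_number 3 berge_K3 k \<le> 3 * k div 4 + 4"
proof -
  define n where "n = 3 * k div 4 + 4"
  have n4: "4 * n \<ge> 3 * k + 13" unfolding n_def by presburger
  have n3: "n \<ge> 4" unfolding n_def by simp
  have "6 * (n choose 3) = n * (n - 1) * (n - 2)" by (rule choose3')
  have "3 * (k * n^2) < 4 * (n * (n - 1) * (n - 2))"
  proof -
    obtain m where m: "n = m + 2" using n3 by (intro that[of "n - 2"]) simp
    have h1: "3 * k + 5 \<le> 4 * m" using n4 m by simp
    have "(3 * k + 5) * (m + 2) \<le> (4 * m) * (m + 2)" by (rule mult_le_mono1[OF h1])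
    then have "3 * k * (m + 2) < 4 * m * (m + 1)" by (simp add: algebra_simps)
    then have "3 * k * (m + 2) * (m + 2) < 4 * m * (m + 1) * (m + 2)"
      by (intro mult_less_mono1) auto
    then show ?thesis using m by (simp add: power2_eq_square algebra_simps)
  qed
  then have "k * n^2 < 8 * (n choose 3)" using \<open>6 * (n choose 3) = _\<close> by linarith
  then have "ramsey_prop 3 berge_K3 k n" by (rule ramsey_prop_upper)
  then show ?thesis unfolding ramsey_number_def n_def[symmetric] by (rule Least_le)
qed


definition tlev :: "nat set \<Rightarrow> nat" where
  "tlev e = (LEAST t. \<exists>u\<in>e. \<exists>v\<in>e. u mod 2^(Suc t) \<noteq> v mod 2^(Suc t))"

definition bt :: "nat \<Rightarrow> nat \<Rightarrow> nat" where "bt t u = u div 2^t mod 2"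

definition hb :: "nat set \<Rightarrow> nat" where
  "hb e = (if 2 \<le> (\<Sum>u\<in>e. bt (tlev e) u) then 1 else 0)"

definition pr :: "nat set \<Rightarrow> nat set" where "pr e = {u\<in>e. bt (tlev e) u = hb e}"

definition rr :: "nat \<Rightarrow> nat set \<Rightarrow> nat" where
  "rr m e = (\<Sum>u\<in>pr e. u div 2^(Suc (tlev e))) mod (m div 2^(Suc (tlev e)) + 1)"

definition col :: "nat \<Rightarrow> nat set \<Rightarrow> nat \<times> nat \<times> nat" where
  "col m e = (tlev e, hb e, rr m e)"

lemma bt01: "bt t u = 0 \<or> bt t u = 1"
  unfolding bt_def by auto

lemma mod_Suc_bt: "u mod 2^(Suc t) = u mod 2^t + 2^t * bt t u"
  unfolding bt_def power_Suc2 mod_mult2_eq by simp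

lemma tlev_ex:
  fixes e :: "nat set"
  assumes "u \<in> e" "v \<in> e" "u \<noteq> v"
  shows "\<exists>t. \<exists>u\<in>e. \<exists>v\<in>e. u mod 2^(Suc t) \<noteq> v mod 2^(Suc t)"
proof -
  have "u < 2^(Suc (u+v))" "v < 2^(Suc (u+v))"
  proof -
    have l: "u + v < 2^(u+v)" by (rule less_exp)
    then have "u < 2*2^(u+v)" "v < 2*2^(u+v)" by linarith+
    then show "u < 2^(Suc (u+v))" "v < 2^(Suc (u+v))" by simp_all
  qed
  then have "u mod 2^(Suc (u+v)) \<noteq> v mod 2^(Suc (u+v))" using assms(3) by simp
  then show ?thesis using assms(1,2) by blast
qed

lemma tlev_props:
  assumes "u \<in> e" "v \<in> e" "u \<noteq> v"
  shows "\<exists>u\<in>e. \<exists>v\<in>e. u mod 2^(Suc (tlev e)) \<noteq> v mod 2^(Suc (tlev e))"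
    and "\<forall>x\<in>e. \<forall>y\<in>e. x mod 2^(tlev e) = y mod 2^(tlev e)"
proof -
  show "\<exists>u\<in>e. \<exists>v\<in>e. u mod 2^(Suc (tlev e)) \<noteq> v mod 2^(Suc (tlev e))"
    unfolding tlev_def by (rule LeastI_ex[OF tlev_ex[OF assms]])
  show "\<forall>x\<in>e. \<forall>y\<in>e. x mod 2^(tlev e) = y mod 2^(tlev e)"
  proof (cases "tlev e")
    case 0 then show ?thesis by simp
  next
    case (Suc t)
    then have "t < tlev e" by simp
    then have "\<not> (\<exists>u\<in>e. \<exists>v\<in>e. u mod 2^(Suc t) \<noteq> v mod 2^(Suc t))"
      unfolding tlev_def by (rule not_less_Least)
    then show ?thesis unfolding Suc by blast
  qed
qed

lemma tlev_less:
  assumes "u \<in> e" "v \<in> e" "u \<noteq> v" "\<forall>x\<in>e. x < 2^s"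
  shows "tlev e < s"
proof -
  have "s \<noteq> 0"
  proof
    assume "s = 0"
    then have "u = 0" "v = 0" using assms by auto
    then show False using assms(3) by simp
  qed
  then obtain s' where s: "s = Suc s'" by (cases s) auto
  have "u mod 2^(Suc s') \<noteq> v mod 2^(Suc s')" using assms s by simp
  then have "tlev e \<le> s'" unfolding tlev_def using assms(1,2) by (intro Least_le) blast
  then show ?thesis using s by simp
qed

lemma triple_struct:
  assumes "card e = 3"
  shows "\<forall>x\<in>e. \<forall>y\<in>e. x mod 2^(tlev e) = y mod 2^(tlev e)"
    and "\<exists>x\<in>e. bt (tlev e) x \<noteq> hb e"
    and "\<forall>x\<in>e. \<forall>y\<in>e. bt (tlev e) x \<noteq> hb e \<longrightarrow> bt (tlev e) y \<noteq> hb e \<longrightarrow> x = y"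
proof -
  obtain a b c where abc: "e = {a,b,c}" "a \<noteq> b" "b \<noteq> c" "a \<noteq> c"
    using assms by (auto simp: card_3_iff)
  have ae: "a \<in> e" "b \<in> e" "c \<in> e" using abc(1) by blast+
  show S1: "\<forall>x\<in>e. \<forall>y\<in>e. x mod 2^(tlev e) = y mod 2^(tlev e)"
    by (rule tlev_props(2)[OF ae(1,2) abc(2)])
  define t where "t = tlev e"
  have "\<exists>u\<in>e. \<exists>v\<in>e. bt t u \<noteq> bt t v"
  proof -
    obtain u v where uv: "u \<in> e" "v \<in> e" "u mod 2^(Suc t) \<noteq> v mod 2^(Suc t)"
      using tlev_props(1)[OF ae(1,2) abc(2)] unfolding t_def by blast
    have "u mod 2^t = v mod 2^t" using S1 uv(1,2) unfolding t_def by blast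
    then show ?thesis using uv mod_Suc_bt[of u t] mod_Suc_bt[of v t] by auto
  qed
  then have nall: "\<not> (bt t a = bt t b \<and> bt t b = bt t c)" using abc by auto
  have sum: "(\<Sum>u\<in>e. bt t u) = bt t a + bt t b + bt t c" using abc by simp
  have h: "hb e = (if 2 \<le> bt t a + bt t b + bt t c then 1 else 0)"
    unfolding hb_def t_def[symmetric] sum ..
  have ba: "bt t a = 0 \<or> bt t a = 1" "bt t b = 0 \<or> bt t b = 1" "bt t c = 0 \<or> bt t c = 1"
    using bt01 by auto
  have ee: "x = a \<or> x = b \<or> x = c" if "x \<in> e" for x using that abc(1) by blast
  show "\<exists>x\<in>e. bt (tlev e) x \<noteq> hb e"
  proof -
    have "bt t a \<noteq> hb e \<or> bt t b \<noteq> hb e \<or> bt t c \<noteq> hb e"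
      using ba nall unfolding h by auto
    then show ?thesis using ae unfolding t_def by blast
  qed
  have "x = y" if "x \<in> e" "y \<in> e" "bt t x \<noteq> hb e" "bt t y \<noteq> hb e" for x y
  proof -
    have "\<not> (bt t a \<noteq> hb e \<and> bt t b \<noteq> hb e)" "\<not> (bt t a \<noteq> hb e \<and> bt t c \<noteq> hb e)"
      "\<not> (bt t b \<noteq> hb e \<and> bt t c \<noteq> hb e)"
      using ba nall unfolding h by auto
    then show ?thesis using ee[OF that(1)] ee[OF that(2)] that(3,4) by blast
  qed
  then show "\<forall>x\<in>e. \<forall>y\<in>e. bt (tlev e) x \<noteq> hb e \<longrightarrow> bt (tlev e) y \<noteq> hb e \<longrightarrow> x = y"
    unfolding t_def by blast
qed


lemma add_mod_cancel_nat:
  fixes a b c L :: nat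
  assumes "(a + b) mod L = (a + c) mod L"
  shows "b mod L = c mod L"
proof -
  have "int ((a + b) mod L) = int ((a + c) mod L)" using assms by simp
  then have "(int a + int b) mod int L = (int a + int c) mod int L" by (simp add: of_nat_mod)
  then have "int L dvd (int a + int b) - (int a + int c)" by (simp add: mod_eq_dvd_iff)
  then have "int L dvd int b - int c" by simp
  then have "int b mod int L = int c mod int L" by (simp add: mod_eq_dvd_iff)
  then have "int (b mod L) = int (c mod L)" by (simp add: of_nat_mod)
  then show ?thesis by simp
qed


lemma ce_D: "e \<in> complete_edges m 3 \<Longrightarrow> card e = 3 \<and> (\<forall>x\<in>e. x < m)"
  unfolding complete_edges_def by auto

lemma col_D: "col m e = (t,h,r) \<Longrightarrow> tlev e = t \<and> hb e = h \<and> rr m e = r"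
  unfolding col_def by auto

lemma card3_eq: "card e = 3 \<Longrightarrow> a \<in> e \<Longrightarrow> b \<in> e \<Longrightarrow> c \<in> e \<Longrightarrow> a \<noteq> b \<Longrightarrow> b \<noteq> c \<Longrightarrow> a \<noteq> c \<Longrightarrow> e = {a,b,c}"
proof -
  assume as: "card e = 3" "a \<in> e" "b \<in> e" "c \<in> e" "a \<noteq> b" "b \<noteq> c" "a \<noteq> c"
  have "finite e" using as(1) card_gt_0_iff by fastforce
  moreover have "{a,b,c} \<subseteq> e" using as by blast
  moreover have "card {a,b,c} = card e" using as by simp
  ultimately show "e = {a,b,c}" using card_subset_eq by blast
qed

lemma pr_eq:
  assumes "card e = 3" "u \<in> e" "v \<in> e" "u \<noteq> v" "bt (tlev e) u = hb e" "bt (tlev e) v = hb e"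
  shows "pr e = {u,v}"
proof
  show "{u,v} \<subseteq> pr e" using assms unfolding pr_def by auto
  show "pr e \<subseteq> {u,v}"
  proof
    fix x assume x: "x \<in> pr e"
    show "x \<in> {u,v}"
    proof (rule ccontr)
      assume nx: "x \<notin> {u,v}"
      have xe: "x \<in> e" "bt (tlev e) x = hb e" using x unfolding pr_def by auto
      have "e = {u,v,x}" using card3_eq[OF assms(1,2,3) xe(1) assms(4)] nx by auto
      moreover obtain z where "z \<in> e" "bt (tlev e) z \<noteq> hb e" using triple_struct(2)[OF assms(1)] by blast
      ultimately show False using assms xe by auto
    qed
  qed
qed

lemma K:
  assumes e: "e \<in> complete_edges m 3" and e': "e' \<in> complete_edges m 3"
    and c: "col m e = (t,h,r)" "col m e' = (t,h,r)"
    and uv: "u \<in> e" "v \<in> e" "u \<in> e'" "v' \<in> e'" "u \<noteq> v" "u \<noteq> v'"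
    and s: "bt t u = h" "bt t v = h" "bt t v' = h"
  shows "v = v'"
proof -
  have ce: "card e = 3" "\<forall>x\<in>e. x < m" using ce_D[OF e] by auto
  have ce': "card e' = 3" "\<forall>x\<in>e'. x < m" using ce_D[OF e'] by auto
  have ct: "tlev e = t" "hb e = h" "rr m e = r" using col_D[OF c(1)] by auto
  have ct': "tlev e' = t" "hb e' = h" "rr m e' = r" using col_D[OF c(2)] by auto
  have pe: "pr e = {u,v}" by (rule pr_eq[OF ce(1) uv(1,2,5)]) (simp_all only: ct s)
  have pe': "pr e' = {u,v'}" by (rule pr_eq[OF ce'(1) uv(3,4,6)]) (simp_all only: ct' s)
  define Q where "Q = (2::nat)^(Suc t)"
  define L where "L = m div Q + 1"
  have "rr m e = (u div Q + v div Q) mod L" unfolding rr_def pe ct Q_def L_def using uv(5) by simp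
  moreover have "rr m e' = (u div Q + v' div Q) mod L" unfolding rr_def pe' ct' Q_def L_def using uv(6) by simp
  ultimately have "(u div Q + v div Q) mod L = (u div Q + v' div Q) mod L" using ct ct' by simp
  then have "v div Q mod L = v' div Q mod L" by (rule add_mod_cancel_nat)
  moreover have "v div Q < L" "v' div Q < L" unfolding L_def using ce(2) ce'(2) uv
    by (simp_all add: div_le_mono le_imp_less_Suc less_imp_le)
  ultimately have d: "v div Q = v' div Q" by simp
  have m1: "v mod 2^t = u mod 2^t" using triple_struct(1)[OF ce(1)] uv(1,2) unfolding ct by blast
  have m2: "v' mod 2^t = u mod 2^t" using triple_struct(1)[OF ce'(1)] uv(3,4) unfolding ct' by blast
  have "v mod Q = v' mod Q" unfolding Q_def mod_Suc_bt using m1 m2 s by simp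
  then show ?thesis using d div_mult_mod_eq[of v Q] div_mult_mod_eq[of v' Q] by metis
qed


lemma third:
  assumes e: "e \<in> complete_edges m 3" and c: "col m e = (t,h,r)"
    and a: "a \<in> e" "bt t a \<noteq> h" and b: "b \<in> e" "bt t b = h"
  shows "\<exists>z. z \<in> e \<and> bt t z = h \<and> z \<noteq> b \<and> z \<noteq> a \<and> e = {a,b,z}"
proof -
  have ce: "card e = 3" using ce_D[OF e] by auto
  have ct: "tlev e = t" "hb e = h" using col_D[OF c] by auto
  have ab: "a \<noteq> b" using a b by auto
  have "e - {a,b} \<noteq> {}"
  proof
    assume "e - {a,b} = {}"
    then have "e \<subseteq> {a,b}" by blast
    then have "card e \<le> card {a,b}" by (intro card_mono) auto
    then show False using ce ab by simp
  qed
  then obtain z where z: "z \<in> e" "z \<noteq> a" "z \<noteq> b" by blast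
  have eq: "e = {a,b,z}" using card3_eq[OF ce a(1) b(1) z(1) ab] z by auto
  have "bt t z = h"
  proof (rule ccontr)
    assume "bt t z \<noteq> h"
    then have "z = a" using triple_struct(3)[OF ce] z(1) a unfolding ct by blast
    then show False using z by simp
  qed
  then show ?thesis using z eq by blast
qed

lemma odd:
  assumes E: "E1 \<in> complete_edges m 3" "E2 \<in> complete_edges m 3" "E3 \<in> complete_edges m 3"
    and c: "col m E1 = (t,h,r)" "col m E2 = (t,h,r)" "col m E3 = (t,h,r)"
    and d: "a \<noteq> b" "b \<noteq> c" "a \<noteq> c"
    and inc: "{a,b} \<subseteq> E1" "{b,c} \<subseteq> E2" "{a,c} \<subseteq> E3"
    and s: "bt t a \<noteq> h" "bt t b = h" "bt t c = h"
  shows "E1 = E3"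
proof -
  obtain z1 where z1: "z1 \<in> E1" "bt t z1 = h" "z1 \<noteq> b" "z1 \<noteq> a" "E1 = {a,b,z1}"
    using third[OF E(1) c(1) _ s(1) _ s(2)] inc(1) by blast
  have "c = z1" by (rule K[OF E(2) E(1) c(2) c(1) _ _ _ z1(1) d(2) z1(3)[symmetric] s(2) s(3) z1(2)]) (use inc in auto)
  then have e1: "E1 = {a,b,c}" using z1 by simp
  obtain z3 where z3: "z3 \<in> E3" "bt t z3 = h" "z3 \<noteq> c" "z3 \<noteq> a" "E3 = {a,c,z3}"
    using third[OF E(3) c(3) _ s(1) _ s(3)] inc(3) by blast
  have "b = z3" by (rule K[OF E(2) E(3) c(2) c(3) _ _ _ z3(1) d(2)[symmetric] z3(3)[symmetric] s(3) s(2) z3(2)]) (use inc in auto)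
  then have e3: "E3 = {a,c,b}" using z3 by simp
  show ?thesis using e1 e3 by auto
qed

lemma class_nb:
  assumes E: "e1 \<in> complete_edges m 3" "e2 \<in> complete_edges m 3" "e3 \<in> complete_edges m 3"
    and c: "col m e1 = col m e2" "col m e2 = col m e3"
    and d: "p \<noteq> q" "q \<noteq> w" "p \<noteq> w"
    and ne: "e1 \<noteq> e2" "e2 \<noteq> e3" "e1 \<noteq> e3"
    and inc: "{p,q} \<subseteq> e1" "{q,w} \<subseteq> e2" "{p,w} \<subseteq> e3"
  shows False
proof -
  obtain t h r where c1: "col m e1 = (t,h,r)" by (cases "col m e1") auto
  have c2: "col m e2 = (t,h,r)" and c3: "col m e3 = (t,h,r)" using c c1 by auto
  have ce: "card e1 = 3" "card e2 = 3" "card e3 = 3" using ce_D E by auto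
  have ct: "tlev e1 = t" "hb e1 = h" "tlev e2 = t" "hb e2 = h" "tlev e3 = t" "hb e3 = h"
    using col_D[OF c1] col_D[OF c2] col_D[OF c3] by auto
  have F2: "x = y" if "x \<in> ei" "y \<in> ei" "bt t x \<noteq> h" "bt t y \<noteq> h" "ei \<in> {e1,e2,e3}" for x y ei
  proof -
    have "card ei = 3" "tlev ei = t" "hb ei = h" using that(5) ce ct by auto
    then show ?thesis using triple_struct(3)[of ei] that(1-4) by metis
  qed
  have n1: "\<not> (bt t p \<noteq> h \<and> bt t q \<noteq> h)" using F2[of p e1 q] inc d by auto
  have n2: "\<not> (bt t q \<noteq> h \<and> bt t w \<noteq> h)" using F2[of q e2 w] inc d by auto
  have n3: "\<not> (bt t p \<noteq> h \<and> bt t w \<noteq> h)" using F2[of p e3 w] inc d by auto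
  consider "bt t p = h" "bt t q = h" "bt t w = h" | "bt t p \<noteq> h" "bt t q = h" "bt t w = h"
    | "bt t p = h" "bt t q \<noteq> h" "bt t w = h" | "bt t p = h" "bt t q = h" "bt t w \<noteq> h"
    using n1 n2 n3 by blast
  then show False
  proof cases
    case 1
    have "p = w" by (rule K[OF E(1) E(2) c1 c2 _ _ _ _ d(1)[symmetric] d(2) 1(2) 1(1) 1(3)]) (use inc in auto)
    then show False using d by simp
  next
    case 2
    have "e1 = e3" by (rule odd[OF E(1) E(2) E(3) c1 c2 c3 d inc 2])
    then show False using ne by simp
  next
    case 3
    have "e1 = e2" by (rule odd[OF E(1) E(3) E(2) c1 c3 c2 d(1)[symmetric] d(3) d(2)]) (use inc 3 in auto)
    then show False using ne by simp
  next
    case 4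
    have "e3 = e2" by (rule odd[OF E(3) E(1) E(2) c3 c1 c2 d(3)[symmetric] d(1) d(2)[symmetric]]) (use inc 4 in auto)
    then show False using ne by simp
  qed
qed


lemma geo_div: "(\<Sum>t<s. m div 2^(Suc t)) + m div 2^s \<le> (m::nat)"
proof (induction s)
  case 0 then show ?case by simp
next
  case (Suc s)
  have "m div 2^(Suc s) = (m div 2^s) div 2" by (simp only: power_Suc2 div_mult2_eq)
  then have "2 * (m div 2^(Suc s)) \<le> m div 2^s" by simp
  then show ?case using Suc by simp
qed

lemma col_range:
  assumes e: "e \<in> complete_edges m 3" and ms: "m \<le> 2^s"
  shows "col m e \<in> Sigma {..<s} (\<lambda>t. {..<2} \<times> {..<m div 2^(Suc t) + 1})"
proof -
  have ce: "card e = 3" "\<forall>x\<in>e. x < m" using ce_D[OF e] by auto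
  obtain a b c where abc: "e = {a,b,c}" "a \<noteq> b" "b \<noteq> c" "a \<noteq> c"
    using ce(1) by (auto simp: card_3_iff)
  have ae: "a \<in> e" "b \<in> e" using abc(1) by blast+
  have lt: "\<forall>x\<in>e. x < 2^s" using ce(2) ms by (meson less_le_trans)
  have "tlev e < s" by (rule tlev_less[OF ae abc(2) lt])
  moreover have "hb e < 2" unfolding hb_def by simp
  moreover have "rr m e < m div 2^(Suc (tlev e)) + 1" unfolding rr_def by simp
  ultimately show ?thesis unfolding col_def by simp
qed

lemma card_colors:
  assumes "m \<le> 2^s"
  shows "card (col m ` complete_edges m 3) \<le> 2 * m + 2 * s"
proof -
  define S where "S = Sigma {..<s} (\<lambda>t. {..<2::nat} \<times> {..<m div 2^(Suc t) + 1})"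
  have sub: "col m ` complete_edges m 3 \<subseteq> S" unfolding S_def using col_range[OF _ assms] by blast
  have fin: "finite S" unfolding S_def by auto
  have "card S = (\<Sum>t<s. card ({..<2::nat} \<times> {..<m div 2^(Suc t) + 1}))"
    unfolding S_def by (rule card_SigmaI) auto
  also have "\<dots> = (\<Sum>t<s. 2 * (m div 2^(Suc t)) + 2)" by (simp add: card_cartesian_product)
  also have "\<dots> = (\<Sum>t<s. 2 * (m div 2^(Suc t))) + (\<Sum>t<s. 2)" by (rule sum.distrib)
  also have "\<dots> = 2 * (\<Sum>t<s. m div 2^(Suc t)) + 2 * s" by (simp only: sum_distrib_left[symmetric]) simp
  also have "\<dots> \<le> 2 * m + 2 * s" using geo_div[where s=s and m=m] by simp
  finally show ?thesis using card_mono[OF fin sub] by simp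
qed

lemma not_ramsey:
  assumes "m \<le> 2^s" "2 * m + 2 * s \<le> k"
  shows "\<not> ramsey_prop 3 berge_K3 k m"
proof
  assume rp: "ramsey_prop 3 berge_K3 k m"
  define C where "C = col m ` complete_edges m 3"
  have finC: "finite C"
  proof -
    have "complete_edges m 3 \<subseteq> Pow {..<m}" unfolding complete_edges_def by auto
    then show ?thesis unfolding C_def using finite_subset by blast
  qed
  obtain g where g: "bij_betw g C {0..<card C}" using ex_bij_betw_finite_nat[OF finC] by blast
  define \<chi> where "\<chi> e = g (col m e)" for e
  have cC: "card C \<le> k" using card_colors[OF assms(1)] assms(2) unfolding C_def by linarith
  have colk: "\<forall>e\<in>complete_edges m 3. \<chi> e < k"
  proof
    fix e assume "e \<in> complete_edges m 3"
    then have "col m e \<in> C" unfolding C_def by blast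
    then have "g (col m e) \<in> {0..<card C}" using g bij_betwE by blast
    then show "\<chi> e < k" using cC unfolding \<chi>_def by simp
  qed
  have "\<exists>i<k. \<exists>V' E'. V' \<subseteq> {..<m} \<and> E' \<subseteq> {e\<in>complete_edges m 3. \<chi> e = i} \<and>
                       (\<forall>e\<in>E'. e \<subseteq> V') \<and> berge_K3 V' E'"
    using rp[unfolded ramsey_prop_def, THEN spec[of _ \<chi>], THEN mp, OF colk] .
  then obtain i V' E' where iE: "E' \<subseteq> {e \<in> complete_edges m 3. \<chi> e = i}" and b: "berge_K3 V' E'"
    by blast
  obtain p q w e1 e2 e3 where H: "p \<noteq> q \<and> q \<noteq> w \<and> p \<noteq> w \<and> e1 \<in> E' \<and> e2 \<in> E' \<and> e3 \<in> E' \<and>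
     e1 \<noteq> e2 \<and> e2 \<noteq> e3 \<and> e1 \<noteq> e3 \<and> {p,q} \<subseteq> e1 \<and> {q,w} \<subseteq> e2 \<and> {p,w} \<subseteq> e3"
    using berge_K3_D[OF b] by (elim exE) (rule that)
  have d: "p \<noteq> q" "q \<noteq> w" "p \<noteq> w" and eE: "e1 \<in> E'" "e2 \<in> E'" "e3 \<in> E'"
    and ne: "e1 \<noteq> e2" "e2 \<noteq> e3" "e1 \<noteq> e3" and inc: "{p,q} \<subseteq> e1" "{q,w} \<subseteq> e2" "{p,w} \<subseteq> e3"
    using H by blast+
  have E: "e1 \<in> complete_edges m 3" "e2 \<in> complete_edges m 3" "e3 \<in> complete_edges m 3"
    using eE iE by auto
  have ch: "\<chi> e1 = i" "\<chi> e2 = i" "\<chi> e3 = i" using eE iE by auto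
  have inC: "col m e1 \<in> C" "col m e2 \<in> C" "col m e3 \<in> C" using E unfolding C_def by blast+
  have inj: "inj_on g C" using g bij_betw_def by blast
  have "col m e1 = col m e2" using inj_onD[OF inj _ inC(1) inC(2)] ch unfolding \<chi>_def by simp
  moreover have "col m e2 = col m e3" using inj_onD[OF inj _ inC(2) inC(3)] ch unfolding \<chi>_def by simp
  ultimately show False using class_nb[OF E _ _ d ne inc] by blast
qed


lemma upper_prop:
  assumes "k \<ge> 1"
  shows "ramsey_prop 3 berge_K3 k (3 * k div 4 + 4)"
proof -
  define n where "n = 3 * k div 4 + 4"
  have n4: "4 * n \<ge> 3 * k + 13" unfolding n_def by presburger
  have n3: "n \<ge> 4" unfolding n_def by simp
  have c3: "6 * (n choose 3) = n * (n - 1) * (n - 2)" by (rule choose3')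
  have "3 * (k * n^2) < 4 * (n * (n - 1) * (n - 2))"
  proof -
    obtain m where m: "n = m + 2" using n3 by (intro that[of "n - 2"]) simp
    have h1: "3 * k + 5 \<le> 4 * m" using n4 m by simp
    have "(3 * k + 5) * (m + 2) \<le> (4 * m) * (m + 2)" by (rule mult_le_mono1[OF h1])
    then have "3 * k * (m + 2) < 4 * m * (m + 1)" by (simp add: algebra_simps)
    then have "3 * k * (m + 2) * (m + 2) < 4 * m * (m + 1) * (m + 2)"
      by (intro mult_less_mono1) auto
    then show ?thesis using m by (simp add: power2_eq_square algebra_simps)
  qed
  then have "k * n^2 < 8 * (n choose 3)" using c3 by linarith
  then show ?thesis unfolding n_def[symmetric] by (rule ramsey_prop_upper)
qed

lemma lower_nat:
  assumes "k \<ge> 1" "k \<le> 2^s"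
  shows "real k / 2 - real s \<le> real (ramsey_number 3 berge_K3 k)"
proof (cases "2 * s \<le> k")
  case False then show ?thesis by simp
next
  case True
  define R where "R = ramsey_number 3 berge_K3 k"
  have PR: "ramsey_prop 3 berge_K3 k R"
    unfolding R_def ramsey_number_def by (rule LeastI[where P="ramsey_prop 3 berge_K3 k", OF upper_prop[OF assms(1)]])
  define n0 where "n0 = (k - 2 * s) div 2"
  have "\<not> ramsey_prop 3 berge_K3 k m" if "m \<le> n0" for m
  proof (rule not_ramsey)
    show "m \<le> 2^s" using that assms(2) unfolding n0_def by linarith
    show "2 * m + 2 * s \<le> k" using that True unfolding n0_def by linarith
  qed
  then have "n0 < R" using PR by (meson not_le)
  then have "real n0 + 1 \<le> real R" by simp
  moreover have "real k / 2 - real s \<le> real n0 + 1"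
  proof -
    have "2 * n0 + 1 \<ge> k - 2 * s" unfolding n0_def by linarith
    then have "2 * real n0 + 1 \<ge> real k - 2 * real s" using True by linarith
    then show ?thesis by linarith
  qed
  ultimately show ?thesis unfolding R_def by linarith
qed

lemma upper_real:
  assumes "k \<ge> 1"
  shows "real (ramsey_number 3 berge_K3 k) \<le> 3 * real k / 4 + 4"
proof -
  have "ramsey_number 3 berge_K3 k \<le> 3 * k div 4 + 4" by (rule upper_nat[OF assms])
  then have "real (ramsey_number 3 berge_K3 k) \<le> real (3 * k div 4) + 4" by simp
  moreover have "real (3 * k div 4) \<le> 3 * real k / 4" by linarith
  ultimately show ?thesis by linarith
qed

lemma log_bound: "((\<lambda>k::nat. (log 2 (real k) + 2) / real k) \<longlongrightarrow> 0) at_top"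
proof -
  have 1: "((\<lambda>k::nat. ln (real k) / real k) \<longlongrightarrow> 0) at_top"
    by (rule filterlim_compose[OF ln_x_over_x_tendsto_0 filterlim_real_sequentially])
  have 2: "((\<lambda>k::nat. 2 / real k) \<longlongrightarrow> 0) at_top"
    by (rule lim_const_over_n)
  have "((\<lambda>k::nat. (ln (real k) / real k) / ln 2 + 2 / real k) \<longlongrightarrow> 0 / ln 2 + 0) at_top"
    by (intro tendsto_add tendsto_divide 1 2 tendsto_const) simp
  moreover have "(\<lambda>k::nat. (ln (real k) / real k) / ln 2 + 2 / real k) = (\<lambda>k::nat. (log 2 (real k) + 2) / real k)"
    by (rule ext) (simp add: log_def add_divide_distrib)
  ultimately show ?thesis by simp
qed

theorem theorem1:
  shows "\<forall>\<epsilon>>0. \<forall>\<^sub>F k in at_top.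
           real k / 2 - \<epsilon> * real k \<le> real (ramsey_number 3 berge_K3 k) \<and>
           real (ramsey_number 3 berge_K3 k) \<le> 3 * real k / 4 + \<epsilon> * real k"
proof (intro allI impI)
  fix \<epsilon> :: real assume ep: "\<epsilon> > 0"
  have ev1: "\<forall>\<^sub>F k in at_top. (log 2 (real k) + 2) / real k < \<epsilon>"
    by (rule order_tendstoD(2)[OF log_bound ep])
  have ev2: "\<forall>\<^sub>F k in at_top. k \<ge> nat \<lceil>4 / \<epsilon>\<rceil> + 1" by (rule eventually_ge_at_top)
  show "\<forall>\<^sub>F k in at_top.
           real k / 2 - \<epsilon> * real k \<le> real (ramsey_number 3 berge_K3 k) \<and>
           real (ramsey_number 3 berge_K3 k) \<le> 3 * real k / 4 + \<epsilon> * real k"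
    using ev1 ev2
  proof eventually_elim
    case (elim k)
    have k1: "k \<ge> 1" using elim(2) by simp
    have kpos: "real k > 0" using k1 by simp
    have k4: "real k \<ge> 4 / \<epsilon>" using elim(2) by linarith
    then have "\<epsilon> * real k \<ge> 4" using ep by (simp add: field_simps)
    then have up: "real (ramsey_number 3 berge_K3 k) \<le> 3 * real k / 4 + \<epsilon> * real k"
      using upper_real[OF k1] by linarith
    define s where "s = nat \<lceil>log 2 (real k)\<rceil>"
    have lg0: "log 2 (real k) \<ge> 0" using k1 by simp
    have sle: "real s \<le> log 2 (real k) + 1" unfolding s_def using lg0 by linarith
    have "real k = 2 powr (log 2 (real k))" using kpos by simp
    also have "\<dots> \<le> 2 powr (real s)" unfolding s_def using lg0 by (intro powr_mono) linarith+
    also have "\<dots> = real (2^s)" by (simp add: powr_realpow)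
    finally have "k \<le> 2^s" by linarith
    then have lo: "real k / 2 - real s \<le> real (ramsey_number 3 berge_K3 k)"
      by (rule lower_nat[OF k1])
    have "log 2 (real k) + 2 < \<epsilon> * real k" using elim(1) kpos by (simp add: field_simps)
    then have "real s \<le> \<epsilon> * real k" using sle by linarith
    then show ?case using lo up by linarith
  qed
qed


end
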